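(* Let $\|\cdot\|$ be a norm on $\mathbb{R}^n$ and let $\Phi\subset\mathbb{R}^n$ be a set of functions such that, for some strictly increasing function $c:(0,1]\to(0,1]$: (i) $\Phi$ contains the constant function $\mathbf 1$, $\Phi=-\Phi$, $\|\phi\|_\infty\le1$ for every $\phi\in\Phi$, and the linear span of $\Phi$ is $\mathbb{R}^n$; (ii) $\langle f,\phi\rangle\le1$ for every $f$ with $\|f\|\le1$ and every $\phi\in\Phi$; (iii) if $\|f\|_\infty\le1$ and $\|f\|\ge\epsilon$ then there exists $\phi\in\Phi$ with $\langle f,\phi\rangle\ge c(\epsilon)$. Let $\epsilon>0$ and let $\eta:\mathbb{R}_+\to\mathbb{R}_+$ be strictly decreasing. Then there is a constant $M_0$, depending only on $\epsilon$, $c$ and $\eta$, such that every $f\in\mathbb{R}^n$ taking values in $[0,1]$ can be written as $f=f_1+f_2+f_3$ where: $f_1$ and $f_1+f_3$ take values in $[0,1]$; $f_1=\sum_i\lambda_i\psi_i$ with $\sum_i|\lambda_i|=M\le M_0$ and each $\psi_i$ a (pointwise) product of functions in $\Phi$; $\|f_2\|\le\eta(M)$; and $\|f_3\|_2\le\epsilon$.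
   Context: Functions in $\mathbb{R}^n$ are functions on $\{1,\dots,n\}$, with $\langle f,g\rangle=\frac1n\sum_xf(x)g(x)$, $\|f\|_2=(\frac1n\sum_xf(x)^2)^{1/2}$, $\|f\|_\infty=\max_x|f(x)|$. *)

theory Defs
  imports "HOL-Analysis.Analysis"
begin

text \<open>Functions on {1..n} are represented as functions nat => real vanishing outside {1..n}.\<close>

definition Vec :: "nat \<Rightarrow> (nat \<Rightarrow> real) set" where
  "Vec n = {f. \<forall>x. x \<notin> {1..n} \<longrightarrow> f x = 0}"

definition one_vec :: "nat \<Rightarrow> nat \<Rightarrow> real" where
  "one_vec n = (\<lambda>x. if x \<in> {1..n} then 1 else 0)"

definition inner_n :: "nat \<Rightarrow> (nat \<Rightarrow> real) \<Rightarrow> (nat \<Rightarrow> real) \<Rightarrow> real" where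
  "inner_n n f g = (1 / real n) * (\<Sum>x\<in>{1..n}. f x * g x)"

definition norm2_n :: "nat \<Rightarrow> (nat \<Rightarrow> real) \<Rightarrow> real" where
  "norm2_n n f = sqrt ((1 / real n) * (\<Sum>x\<in>{1..n}. (f x)^2))"

definition norminf_n :: "nat \<Rightarrow> (nat \<Rightarrow> real) \<Rightarrow> real" where
  "norminf_n n f = Max ((\<lambda>x. \<bar>f x\<bar>) ` {1..n})"

definition is_norm_on :: "nat \<Rightarrow> ((nat \<Rightarrow> real) \<Rightarrow> real) \<Rightarrow> bool" where
  "is_norm_on n N \<longleftrightarrow>
     (\<forall>f\<in>Vec n. N f \<ge> 0) \<and>
     (\<forall>f\<in>Vec n. N f = 0 \<longleftrightarrow> f = (\<lambda>x. 0)) \<and>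
     (\<forall>f\<in>Vec n. \<forall>a::real. N (\<lambda>x. a * f x) = \<bar>a\<bar> * N f) \<and>
     (\<forall>f\<in>Vec n. \<forall>g\<in>Vec n. N (\<lambda>x. f x + g x) \<le> N f + N g)"

definition lin_span :: "(nat \<Rightarrow> real) set \<Rightarrow> (nat \<Rightarrow> real) set" where
  "lin_span S = {g. \<exists>T u. finite T \<and> T \<subseteq> S \<and> g = (\<lambda>x. \<Sum>v\<in>T. u v * v x)}"

definition is_prod_of :: "(nat \<Rightarrow> real) set \<Rightarrow> (nat \<Rightarrow> real) \<Rightarrow> bool" where
  "is_prod_of Phi psi \<longleftrightarrow>
     (\<exists>ps. ps \<noteq> [] \<and> set ps \<subseteq> Phi \<and> psi = (\<lambda>x. prod_list (map (\<lambda>p. p x) ps)))"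

end

theory Submission
  imports Defs "HOL-Analysis.Analysis"
begin

definition clampr :: "real \<Rightarrow> real" where "clampr x = max 0 (min 1 x)"

lemma poly_clamp:
  assumes d: "(\<delta>::real) > 0"
  shows "\<exists>a d. \<forall>x\<in>{-1..2::real}. (\<Sum>m\<le>d. a m * x^m) \<in> {0..1} \<and>
            \<bar>(\<Sum>m\<le>d. a m * x^m) - clampr x\<bar> \<le> \<delta>"
proof -
  have cc: "continuous_on {-1..2::real} clampr" unfolding clampr_def
    by (intro continuous_intros)
  obtain q where q: "real_polynomial_function q" "\<And>x. x \<in> {-1..2::real} \<Longrightarrow> \<bar>clampr x - q x\<bar> < \<delta>/2"
    using Stone_Weierstrass_real_polynomial_function[OF compact_Icc cc, of "\<delta>/2"] d by auto
  define P where "P = (\<lambda>x. (q x + \<delta>/2) * (1/(1+\<delta>)))"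
  have "real_polynomial_function P" unfolding P_def
    by (rule real_polynomial_function.intros(4)[OF real_polynomial_function.intros(3)[OF q(1) real_polynomial_function.intros(2)] real_polynomial_function.intros(2)])
  then obtain a d where Pe: "P = (\<lambda>x. \<Sum>m\<le>d. a m * x^m)"
    using real_polynomial_function_iff_sum by auto
  have "\<forall>x\<in>{-1..2::real}. P x \<in> {0..1} \<and> \<bar>P x - clampr x\<bar> \<le> \<delta>"
  proof
    fix x :: real assume x: "x \<in> {-1..2}"
    have c01: "clampr x \<ge> 0" "clampr x \<le> 1" unfolding clampr_def by auto
    have qx: "\<bar>clampr x - q x\<bar> < \<delta>/2" using q(2)[OF x] .
    have Px: "P x = (q x + \<delta>/2) / (1+\<delta>)" unfolding P_def by simp
    have h1: "clampr x - q x < \<delta>/2" and h2: "q x - clampr x < \<delta>/2" using abs_less_iff[THEN iffD1, OF qx] by auto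
    have b1: "q x + \<delta>/2 \<ge> 0" "q x + \<delta>/2 \<le> 1 + \<delta>" using h1 h2 c01 d by linarith+
    have p1: "P x \<ge> 0" unfolding Px using b1 d by simp
    have p2: "P x \<le> 1" unfolding Px using b1 d by simp
    have e1: "P x - q x = \<delta> * (1/2 - q x) / (1+\<delta>)" unfolding Px using d by (simp add: field_simps)
    have e2: "\<bar>1/2 - q x\<bar> \<le> (1+\<delta>)/2" unfolding abs_le_iff using h1 h2 c01 d by (simp add: field_simps)
    have "\<bar>P x - q x\<bar> = \<delta> * \<bar>1/2 - q x\<bar> / (1+\<delta>)" unfolding e1 using d by (simp add: abs_mult abs_divide)
    also have "\<dots> \<le> \<delta> * ((1+\<delta>)/2) / (1+\<delta>)"
      using e2 d by (intro divide_right_mono mult_left_mono) auto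
    also have "\<dots> = \<delta>/2" using d by (simp add: field_simps)
    finally have "\<bar>P x - q x\<bar> \<le> \<delta>/2" .
    then show "P x \<in> {0..1} \<and> \<bar>P x - clampr x\<bar> \<le> \<delta>" 
    proof -
      have "\<bar>P x - clampr x\<bar> \<le> \<delta>" using \<open>\<bar>P x - q x\<bar> \<le> \<delta>/2\<close> qx by linarith
      then show ?thesis using p1 p2 by simp
    qed
  qed
  then show ?thesis unfolding Pe by blast
qed



fun aseq :: "(nat \<Rightarrow> nat) \<Rightarrow> nat \<Rightarrow> nat" where
  "aseq W 0 = 0" | "aseq W (Suc j) = aseq W j + W (aseq W j)"

lemma tele:
  fixes e :: "nat \<Rightarrow> real"
  assumes "\<forall>m<W. e (a+m) - e (Suc (a+m)) \<ge> g"
  shows "e a - e (a+W) \<ge> real W * g"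
  using assms
proof (induction W)
  case 0 then show ?case by simp
next
  case (Suc W)
  then have "e a - e (a+W) \<ge> real W * g" by auto
  moreover have "e (a+W) - e (Suc (a+W)) \<ge> g" using Suc.prems by auto
  ultimately show ?case by (simp add: algebra_simps)
qed

lemma tele2:
  fixes e :: "nat \<Rightarrow> real" and a :: "nat \<Rightarrow> nat"
  assumes "\<forall>j\<le>R. e (a j) - e (a (Suc j)) > g"
  shows "e (a 0) - e (a (Suc R)) \<ge> real (Suc R) * g"
  using assms
proof (induction R)
  case 0 then show ?case by force
next
  case (Suc R)
  then have "e (a 0) - e (a (Suc R)) \<ge> real (Suc R) * g" by auto
  moreover have "e (a (Suc R)) - e (a (Suc (Suc R))) > g" using Suc.prems by auto
  ultimately show ?case by (simp add: algebra_simps)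
qed

lemma comb:
  fixes e :: "nat \<Rightarrow> real" and \<Gamma> :: "nat \<Rightarrow> real"
  assumes dec: "\<forall>k. e (Suc k) \<le> e k" and b: "\<forall>k. 0 \<le> e k \<and> e k \<le> 1"
    and G: "\<forall>a. \<Gamma> a > 0" and ep: "\<epsilon>' > 0"
  shows "\<exists>i k. i \<le> k \<and> k \<le> aseq (\<lambda>a. nat \<lceil>1 / \<Gamma> a\<rceil> + 1) (Suc (nat \<lceil>1/\<epsilon>'\<rceil>)) \<and>
           e i - e k \<le> \<epsilon>' \<and> e k - e (Suc k) < \<Gamma> i"
proof -
  define W where "W = (\<lambda>a. nat \<lceil>1 / \<Gamma> a\<rceil> + 1)"
  define R where "R = nat \<lceil>1/\<epsilon>'\<rceil>"
  define A where "A = aseq W"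
  have ds: "decseq e" using dec by (simp add: decseq_SucI)
  have ia: "incseq A" unfolding A_def by (rule incseq_SucI) simp
  have inner: "\<exists>k. a \<le> k \<and> k < a + W a \<and> e k - e (Suc k) < \<Gamma> a" for a
  proof (rule ccontr)
    assume "\<not> ?thesis"
    then have "\<forall>m<W a. e (a+m) - e (Suc (a+m)) \<ge> \<Gamma> a"
      by (metis add_less_cancel_left le_add1 not_less)
    from tele[OF this] have t: "e a - e (a + W a) \<ge> real (W a) * \<Gamma> a" .
    have "real (W a) \<ge> 1 / \<Gamma> a + 1" unfolding W_def by linarith
    then have "real (W a) * \<Gamma> a \<ge> (1 / \<Gamma> a + 1) * \<Gamma> a"
      using G by (intro mult_right_mono) (auto simp: less_imp_le)
    also have "(1 / \<Gamma> a + 1) * \<Gamma> a = 1 + \<Gamma> a" using G[rule_format, of a] by (simp add: field_simps)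
    finally have "e a - e (a + W a) \<ge> 1 + \<Gamma> a" using t by linarith
    moreover have "e a \<le> 1" "e (a + W a) \<ge> 0" using b by auto
    ultimately show False using G[rule_format, of a] by linarith
  qed
  have outer: "\<exists>j\<le>R. e (A j) - e (A (Suc j)) \<le> \<epsilon>'"
  proof (rule ccontr)
    assume "\<not> ?thesis"
    then have "\<forall>j\<le>R. e (A j) - e (A (Suc j)) > \<epsilon>'" by auto
    from tele2[where e=e and a=A and R=R, OF this] have t: "e (A 0) - e (A (Suc R)) \<ge> real (Suc R) * \<epsilon>'" .
    have "real (Suc R) \<ge> 1 / \<epsilon>' + 1" unfolding R_def by linarith
    then have "real (Suc R) * \<epsilon>' \<ge> (1 / \<epsilon>' + 1) * \<epsilon>'"
      using ep by (intro mult_right_mono) auto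
    also have "(1 / \<epsilon>' + 1) * \<epsilon>' = 1 + \<epsilon>'" using ep by (simp add: field_simps)
    finally have "e (A 0) - e (A (Suc R)) \<ge> 1 + \<epsilon>'" using t by linarith
    moreover have "e (A 0) \<le> 1" "e (A (Suc R)) \<ge> 0" using b by auto
    ultimately show False using ep by linarith
  qed
  then obtain j where j: "j \<le> R" "e (A j) - e (A (Suc j)) \<le> \<epsilon>'" by auto
  obtain k where k: "A j \<le> k" "k < A j + W (A j)" "e k - e (Suc k) < \<Gamma> (A j)"
    using inner by blast
  have AS: "A (Suc j) = A j + W (A j)" unfolding A_def by simp
  have "e (A (Suc j)) \<le> e k" using ds k(2) AS by (simp add: decseqD)
  then have "e (A j) - e k \<le> \<epsilon>'" using j(2) by linarith
  moreover have "k \<le> A (Suc R)"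
  proof -
    have "A (Suc j) \<le> A (Suc R)" using ia j(1) by (simp add: incseqD)
    then show ?thesis using k(2) AS by linarith
  qed
  ultimately show ?thesis using k unfolding A_def W_def R_def by blast
qed



type_synonym clist = "(real \<times> (nat \<Rightarrow> real)) list"

definition valc :: "clist \<Rightarrow> nat \<Rightarrow> real" where
  "valc l x = sum_list (map (\<lambda>ap. fst ap * snd ap x) l)"
definition cplx :: "clist \<Rightarrow> real" where
  "cplx l = sum_list (map (\<lambda>ap. \<bar>fst ap\<bar>) l)"
definition okl :: "(nat \<Rightarrow> real) set \<Rightarrow> clist \<Rightarrow> bool" where
  "okl Phi l \<longleftrightarrow> (\<forall>ap\<in>set l. is_prod_of Phi (snd ap))"

definition scl :: "real \<Rightarrow> clist \<Rightarrow> clist" where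
  "scl r l = map (\<lambda>ap. (r * fst ap, snd ap)) l"
definition mul :: "clist \<Rightarrow> clist \<Rightarrow> clist" where
  "mul l1 l2 = concat (map (\<lambda>ap. map (\<lambda>bq. (fst ap * fst bq, \<lambda>x. snd ap x * snd bq x)) l2) l1)"

primrec pw :: "(nat \<Rightarrow> real) \<Rightarrow> clist \<Rightarrow> nat \<Rightarrow> clist" where
  "pw u1 l 0 = [(1, u1)]" | "pw u1 l (Suc m) = mul (pw u1 l m) l"

lemma valc_simps[simp]:
  "valc [] x = 0" "valc (ap # l) x = fst ap * snd ap x + valc l x"
  "valc (l1 @ l2) x = valc l1 x + valc l2 x"
  by (auto simp: valc_def)

lemma cplx_simps[simp]:
  "cplx [] = 0" "cplx (ap # l) = \<bar>fst ap\<bar> + cplx l"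
  "cplx (l1 @ l2) = cplx l1 + cplx l2"
  by (auto simp: cplx_def)

lemma cplx_nonneg: "cplx l \<ge> 0"
  by (induction l) auto

lemma okl_simps[simp]:
  "okl Phi []" "okl Phi (ap # l) \<longleftrightarrow> is_prod_of Phi (snd ap) \<and> okl Phi l"
  "okl Phi (l1 @ l2) \<longleftrightarrow> okl Phi l1 \<and> okl Phi l2"
  by (auto simp: okl_def)

lemma valc_scl[simp]: "valc (scl r l) x = r * valc l x"
  by (induction l) (auto simp: scl_def algebra_simps)
lemma cplx_scl[simp]: "cplx (scl r l) = \<bar>r\<bar> * cplx l"
  by (induction l) (auto simp: scl_def algebra_simps abs_mult)
lemma okl_scl[simp]: "okl Phi (scl r l) = okl Phi l"
  by (induction l) (auto simp: scl_def)

lemma valc_mul[simp]: "valc (mul l1 l2) x = valc l1 x * valc l2 x"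
proof -
  have inner: "valc (map (\<lambda>bq. (a * fst bq, \<lambda>x. p x * snd bq x)) l2) x = a * p x * valc l2 x" for a p
    by (induction l2) (auto simp: algebra_simps)
  show ?thesis unfolding mul_def
    by (induction l1) (auto simp: inner algebra_simps)
qed

lemma cplx_mul[simp]: "cplx (mul l1 l2) = cplx l1 * cplx l2"
proof -
  have inner: "cplx (map (\<lambda>bq. (a * fst bq, \<lambda>x. p x * snd bq x)) l2) = \<bar>a\<bar> * cplx l2" for a p
    by (induction l2) (auto simp: algebra_simps abs_mult)
  have cc: "cplx (concat xs) = sum_list (map cplx xs)" for xs
    by (induction xs) auto
  show ?thesis unfolding mul_def
    by (induction l1) (auto simp: inner algebra_simps)
qed

lemma is_prod_of_mult:
  assumes "is_prod_of Phi p" "is_prod_of Phi q"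
  shows "is_prod_of Phi (\<lambda>x. p x * q x)"
proof -
  obtain ps where ps: "ps \<noteq> []" "set ps \<subseteq> Phi" "p = (\<lambda>x. prod_list (map (\<lambda>r. r x) ps))"
    using assms(1) unfolding is_prod_of_def by blast
  obtain qs where qs: "qs \<noteq> []" "set qs \<subseteq> Phi" "q = (\<lambda>x. prod_list (map (\<lambda>r. r x) qs))"
    using assms(2) unfolding is_prod_of_def by blast
  show ?thesis unfolding is_prod_of_def
    by (rule exI[of _ "ps @ qs"]) (use ps qs in auto)
qed

lemma is_prod_of_single: "p \<in> Phi \<Longrightarrow> is_prod_of Phi p"
  unfolding is_prod_of_def by (rule exI[of _ "[p]"]) auto

lemma okl_mul: "okl Phi l1 \<Longrightarrow> okl Phi l2 \<Longrightarrow> okl Phi (mul l1 l2)"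
  unfolding okl_def mul_def by (auto intro: is_prod_of_mult)

lemma pw_props:
  assumes "u1 \<in> Phi" "okl Phi l"
  shows "okl Phi (pw u1 l m) \<and> cplx (pw u1 l m) = cplx l ^ m \<and> (\<forall>x. valc (pw u1 l m) x = u1 x * valc l x ^ m)"
  by (induction m) (auto simp: assms okl_mul is_prod_of_single)

lemma valc_concat_map: "valc (concat (map F xs)) x = sum_list (map (\<lambda>m. valc (F m) x) xs)"
  by (induction xs) auto
lemma cplx_concat_map: "cplx (concat (map F xs)) = sum_list (map (\<lambda>m. cplx (F m)) xs)"
  by (induction xs) auto
lemma okl_concat_map: "(\<forall>m\<in>set xs. okl Phi (F m)) \<Longrightarrow> okl Phi (concat (map F xs))"
  by (induction xs) auto

lemma prod_Vec:
  assumes "Phi \<subseteq> Vec n" "is_prod_of Phi p" shows "p \<in> Vec n"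
proof -
  obtain ps where ps: "ps \<noteq> []" "set ps \<subseteq> Phi" "p = (\<lambda>x. prod_list (map (\<lambda>r. r x) ps))"
    using assms(2) unfolding is_prod_of_def by blast
  have "prod_list (map (\<lambda>r. r x) ps) = 0" if "x \<notin> {1..n}" for x
  proof -
    obtain r where "r \<in> set ps" using ps(1) by (cases ps) auto
    then have "r x = 0" using ps(2) assms(1) that unfolding Vec_def by auto
    then show ?thesis using \<open>r \<in> set ps\<close> by (simp add: prod_list_zero_iff)
  qed
  then show ?thesis unfolding Vec_def ps(3) by auto
qed

lemma valc_Vec:
  assumes "Phi \<subseteq> Vec n" "okl Phi l" shows "valc l \<in> Vec n"
  using assms(2)
proof (induction l)
  case Nil then show ?case by (simp add: Vec_def)
next
  case (Cons ap l)
  then have "snd ap \<in> Vec n" using prod_Vec[OF assms(1)] by auto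
  then show ?case using Cons by (auto simp: Vec_def)
qed



definition en :: "nat \<Rightarrow> (nat\<Rightarrow>real) \<Rightarrow> (nat\<Rightarrow>real) \<Rightarrow> real" where
  "en n f g = (1/real n) * (\<Sum>x\<in>{1..n}. (f x - g x)^2)"

lemma phi_bound: "norminf_n n \<phi> \<le> 1 \<Longrightarrow> x \<in> {1..n} \<Longrightarrow> \<bar>\<phi> x\<bar> \<le> 1"
proof -
  assume a: "norminf_n n \<phi> \<le> 1" "x \<in> {1..n}"
  have "\<bar>\<phi> x\<bar> \<le> Max ((\<lambda>x. \<bar>\<phi> x\<bar>) ` {1..n})" by (rule Max_ge) (use a in auto)
  then show ?thesis using a unfolding norminf_n_def by linarith
qed

lemma clamp_close: "(v::real) \<in> {0..1} \<Longrightarrow> \<bar>v - clampr y\<bar> \<le> \<bar>v - y\<bar>"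
  unfolding clampr_def by (auto simp: abs_if max_def min_def)

lemma sum_upt_Suc: "sum_list (map (F::nat\<Rightarrow>real) [0..<Suc d]) = (\<Sum>m\<le>d. F m)"
  by (induction d) auto

lemma improve:
  assumes n1: "n \<ge> 1" and one: "one_vec n \<in> Phi"
    and ninf: "\<forall>\<phi>\<in>Phi. norminf_n n \<phi> \<le> 1"
    and f01: "\<forall>x\<in>{1..n}. f x \<in> {0..1}"
    and lg: "okl Phi lg" "cplx lg \<le> B" and g01: "\<forall>x\<in>{1..n}. valc lg x \<in> {0..1}"
    and ph: "\<phi> \<in> Phi" and kap: "0 < \<kappa>" "\<kappa> \<le> 1"
    and inn: "inner_n n (\<lambda>x. f x - valc lg x) \<phi> \<ge> \<kappa>"
    and dl: "0 < \<delta>" "\<delta> \<le> \<kappa>^2/10"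
    and P: "\<forall>y\<in>{-1..2}. (\<Sum>m\<le>d. a m * y^m) \<in> {0..1} \<and> \<bar>(\<Sum>m\<le>d. a m * y^m) - clampr y\<bar> \<le> \<delta>"
  shows "\<exists>l. okl Phi l \<and> cplx l \<le> (\<Sum>m\<le>d. \<bar>a m\<bar> * (B+1)^m) \<and> (\<forall>x\<in>{1..n}. valc l x \<in> {0..1})
            \<and> en n f (valc l) \<le> en n f (valc lg) - \<kappa>^2/2"
proof -
  define g where "g = valc lg"
  define lu where "lu = lg @ [(\<kappa>, \<phi>)]"
  define u where "u = valc lu"
  have u_eq: "u x = g x + \<kappa> * \<phi> x" for x unfolding u_def lu_def g_def by simp
  have oklu: "okl Phi lu" unfolding lu_def using lg ph by (simp add: is_prod_of_single)
  have cu: "cplx lu \<le> B + 1" unfolding lu_def using lg kap by simp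
  define lf where "lf = concat (map (\<lambda>m. scl (a m) (pw (one_vec n) lu m)) [0..<Suc d])"
  have pwp: "okl Phi (pw (one_vec n) lu m) \<and> cplx (pw (one_vec n) lu m) = cplx lu ^ m \<and>
      (\<forall>x. valc (pw (one_vec n) lu m) x = one_vec n x * valc lu x ^ m)" for m
    by (rule pw_props[OF one oklu])
  have oklf: "okl Phi lf" unfolding lf_def using pwp by (intro okl_concat_map) auto
  have "cplx lf = (\<Sum>m\<le>d. \<bar>a m\<bar> * cplx lu ^ m)"
    unfolding lf_def cplx_concat_map sum_upt_Suc using pwp by simp
  also have "\<dots> \<le> (\<Sum>m\<le>d. \<bar>a m\<bar> * (B+1)^m)"
    using cu cplx_nonneg[of lu] by (intro sum_mono mult_left_mono power_mono) auto
  finally have clf: "cplx lf \<le> (\<Sum>m\<le>d. \<bar>a m\<bar> * (B+1)^m)" .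
  have vx: "valc lf x = (\<Sum>m\<le>d. a m * u x ^ m)" if "x \<in> {1..n}" for x
    unfolding lf_def valc_concat_map sum_upt_Suc using pwp that by (simp add: one_vec_def u_def)
  have ux: "u x \<in> {-1..2}" if "x \<in> {1..n}" for x
  proof -
    have "\<bar>\<phi> x\<bar> \<le> 1" using phi_bound ninf ph that by blast
    then have "\<bar>\<kappa> * \<phi> x\<bar> \<le> 1" using kap by (simp add: abs_mult mult_le_one)
    moreover have "valc lg x \<in> {0..1}" using g01 that by blast
    ultimately show ?thesis unfolding u_eq g_def by (auto simp: abs_le_iff)
  qed
  have lf01: "\<forall>x\<in>{1..n}. valc lf x \<in> {0..1}" using vx ux P by auto
  have pt: "(f x - valc lf x)^2 \<le> (f x - u x)^2 + 5 * \<delta>" if x: "x \<in> {1..n}" for x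
  proof -
    have a1: "\<bar>valc lf x - clampr (u x)\<bar> \<le> \<delta>" using vx[OF x] P ux[OF x] by auto
    have a2: "\<bar>f x - clampr (u x)\<bar> \<le> \<bar>f x - u x\<bar>" using clamp_close f01 x by auto
    have fx: "f x \<in> {0..1}" using f01 x by blast
    have a3: "\<bar>f x - u x\<bar> \<le> 2" using ux[OF x] fx by (auto simp: abs_le_iff)
    have b: "\<bar>f x - valc lf x\<bar> \<le> \<bar>f x - u x\<bar> + \<delta>" using a1 a2 by linarith
    have "(f x - valc lf x)^2 = \<bar>f x - valc lf x\<bar>^2" by simp
    also have "\<dots> \<le> (\<bar>f x - u x\<bar> + \<delta>)^2" using b by (intro power_mono) auto
    also have "\<dots> = \<bar>f x - u x\<bar>^2 + 2*\<delta>*\<bar>f x - u x\<bar> + \<delta>^2" by (simp add: power2_eq_square algebra_simps)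
    also have "\<dots> \<le> \<bar>f x - u x\<bar>^2 + 2*\<delta>*2 + \<delta>*1"
    proof -
      have "\<kappa>^2 \<le> 1" using kap by (simp add: power_le_one)
      then have "\<delta> \<le> 1" using dl by linarith
      then have "\<delta>^2 \<le> \<delta>*1" using dl by (simp add: power2_eq_square mult_left_mono)
      moreover have "2*\<delta>*\<bar>f x - u x\<bar> \<le> 2*\<delta>*2" using a3 dl by (intro mult_left_mono) auto
      ultimately show ?thesis by linarith
    qed
    finally show ?thesis by simp
  qed
  have nn: "real n > 0" using n1 by simp
  have cardn: "card {1..n} = n" by simp
  have "en n f (valc lf) \<le> (1/real n) * (\<Sum>x\<in>{1..n}. (f x - u x)^2 + 5*\<delta>)"
    unfolding en_def using nn pt by (intro mult_left_mono sum_mono) auto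
  also have "\<dots> = en n f u + 5*\<delta>"
    unfolding en_def sum.distrib using nn by (simp add: cardn field_simps)
  finally have e1: "en n f (valc lf) \<le> en n f u + 5*\<delta>" .
  have "en n f u = (1/real n) * (\<Sum>x\<in>{1..n}. (f x - g x)^2 - 2*\<kappa>*((f x - g x) * \<phi> x) + \<kappa>^2 * (\<phi> x)^2)"
    unfolding en_def u_eq by (simp add: power2_eq_square algebra_simps)
  also have "\<dots> = en n f g - 2*\<kappa> * inner_n n (\<lambda>x. f x - g x) \<phi> + \<kappa>^2 * ((1/real n) * (\<Sum>x\<in>{1..n}. (\<phi> x)^2))"
    unfolding en_def inner_n_def sum.distrib sum_subtractf sum_distrib_left[symmetric] by (simp add: algebra_simps)
  finally have e2: "en n f u = en n f g - 2*\<kappa> * inner_n n (\<lambda>x. f x - g x) \<phi> + \<kappa>^2 * ((1/real n) * (\<Sum>x\<in>{1..n}. (\<phi> x)^2))" .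
  have "(\<Sum>x\<in>{1..n}. (\<phi> x)^2) \<le> (\<Sum>x\<in>{1..n}. 1)"
  proof (rule sum_mono)
    fix x assume x: "x \<in> {1..n}"
    have "\<bar>\<phi> x\<bar> \<le> 1" using phi_bound ninf ph x by blast
    then have "\<bar>\<phi> x\<bar>^2 \<le> 1" by (intro power_le_one) auto
    then show "(\<phi> x)^2 \<le> 1" by (metis power2_abs)
  qed
  then have "(1/real n) * (\<Sum>x\<in>{1..n}. (\<phi> x)^2) \<le> 1" using nn by (simp add: field_simps)
  then have e3: "\<kappa>^2 * ((1/real n) * (\<Sum>x\<in>{1..n}. (\<phi> x)^2)) \<le> \<kappa>^2"
    using mult_left_le[of "(1/real n) * (\<Sum>x\<in>{1..n}. (\<phi> x)^2)" "\<kappa>^2"] by simp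
  have e4: "2*\<kappa> * inner_n n (\<lambda>x. f x - g x) \<phi> \<ge> 2*\<kappa>*\<kappa>" using inn kap unfolding g_def
    by (intro mult_left_mono) auto
  have "en n f (valc lf) \<le> en n f g - \<kappa>^2 + 5*\<delta>" using e1 e2 e3 e4 by (simp add: power2_eq_square)
  then have "en n f (valc lf) \<le> en n f g - \<kappa>^2/2" using dl by linarith
  then show ?thesis using oklf clf lf01 unfolding g_def by blast
qed



fun lev :: "(real \<Rightarrow> real) \<Rightarrow> nat \<Rightarrow> real" where
  "lev F 0 = 0" | "lev F (Suc k) = F (lev F k)"

lemma valc_nth: "valc l = (\<lambda>x. \<Sum>j<length l. fst (l!j) * snd (l!j) x)"
  unfolding valc_def by (rule ext) (simp add: sum_list_sum_nth atLeast0LessThan)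
lemma cplx_nth: "cplx l = (\<Sum>j<length l. \<bar>fst (l!j)\<bar>)"
  unfolding cplx_def by (simp add: sum_list_sum_nth atLeast0LessThan)

theorem theorem5p8:
  fixes \<epsilon> :: real and c :: "real \<Rightarrow> real" and \<eta> :: "real \<Rightarrow> real"
  assumes eps: "\<epsilon> > 0"
    and c_range: "\<forall>t\<in>{0<..1}. c t \<in> {0<..1}"
    and c_mono: "strict_mono_on {0<..1} c"
    and eta_range: "\<forall>t\<ge>0. \<eta> t \<ge> 0"
    and eta_mono: "\<forall>s t. 0 \<le> s \<and> s < t \<longrightarrow> \<eta> t < \<eta> s"
  shows "\<exists>M0::real. \<forall>(n::nat) (N::(nat \<Rightarrow> real) \<Rightarrow> real) (Phi::(nat \<Rightarrow> real) set).
     n \<ge> 1 \<and> is_norm_on n N \<and> Phi \<subseteq> Vec n \<and>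
     one_vec n \<in> Phi \<and> (\<forall>\<phi>\<in>Phi. (\<lambda>x. - \<phi> x) \<in> Phi) \<and>
     (\<forall>\<phi>\<in>Phi. norminf_n n \<phi> \<le> 1) \<and> lin_span Phi = Vec n \<and>
     (\<forall>f\<in>Vec n. N f \<le> 1 \<longrightarrow> (\<forall>\<phi>\<in>Phi. inner_n n f \<phi> \<le> 1)) \<and>
     (\<forall>f\<in>Vec n. \<forall>e\<in>{0<..1}. norminf_n n f \<le> 1 \<and> N f \<ge> e \<longrightarrow>
         (\<exists>\<phi>\<in>Phi. inner_n n f \<phi> \<ge> c e))
     \<longrightarrow>
     (\<forall>f\<in>Vec n. (\<forall>x\<in>{1..n}. f x \<in> {0..1}) \<longrightarrow>
        (\<exists>f1 f2 f3 (k::nat) (lam::nat \<Rightarrow> real) (psi::nat \<Rightarrow> nat \<Rightarrow> real) M.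
           f1 \<in> Vec n \<and> f2 \<in> Vec n \<and> f3 \<in> Vec n \<and>
           f = (\<lambda>x. f1 x + f2 x + f3 x) \<and>
           (\<forall>x\<in>{1..n}. f1 x \<in> {0..1} \<and> f1 x + f3 x \<in> {0..1}) \<and>
           (\<forall>i<k. is_prod_of Phi (psi i)) \<and>
           f1 = (\<lambda>x. \<Sum>i<k. lam i * psi i x) \<and>
           M = (\<Sum>i<k. \<bar>lam i\<bar>) \<and> M \<le> M0 \<and>
           N f2 \<le> \<eta> M \<and> norm2_n n f3 \<le> \<epsilon>))"
proof -
  have "\<forall>\<delta>. \<exists>ad. \<delta> > 0 \<longrightarrow> (\<forall>x\<in>{-1..2::real}. (\<Sum>m\<le>snd ad. fst ad m * x^m) \<in> {0..1} \<and>
            \<bar>(\<Sum>m\<le>snd ad. fst ad m * x^m) - clampr x\<bar> \<le> \<delta>)"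
    using poly_clamp by fastforce
  then obtain pol where pol: "\<forall>\<delta>. \<delta> > 0 \<longrightarrow> (\<forall>x\<in>{-1..2::real}. (\<Sum>m\<le>snd (pol \<delta>). fst (pol \<delta>) m * x^m) \<in> {0..1} \<and>
            \<bar>(\<Sum>m\<le>snd (pol \<delta>). fst (pol \<delta>) m * x^m) - clampr x\<bar> \<le> \<delta>)"
    by metis
  define \<kappa> where "\<kappa> = (\<lambda>A. c (min (\<eta> A) 1))"
  define \<delta>f where "\<delta>f = (\<lambda>A. (\<kappa> A)^2/10)"
  define Hf where "Hf = (\<lambda>B A. (\<Sum>m\<le>snd (pol (\<delta>f A)). \<bar>fst (pol (\<delta>f A)) m\<bar> * (B+1)^m))"
  define F where "F = (\<lambda>B. max (B+1) (Hf B B))"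
  define L where "L = lev F"
  define \<Gamma> where "\<Gamma> = (\<lambda>k. (\<kappa> (L k))^2/4)"
  define K0 where "K0 = aseq (\<lambda>a. nat \<lceil>1 / \<Gamma> a\<rceil> + 1) (Suc (nat \<lceil>1/(\<epsilon>^2/4)\<rceil>))"
  have LSuc: "L (Suc k) \<ge> L k + 1" "L (Suc k) \<ge> Hf (L k) (L k)" for k
    unfolding L_def F_def by auto
  have Linc: "incseq L" using LSuc(1) by (intro incseq_SucI) (smt (z3))
  have L0: "L k \<ge> 0" for k
    using Linc[THEN incseqD, of 0 k] unfolding L_def by simp
  have eta_pos: "\<eta> t > 0" if "t \<ge> 0" for t
    using eta_mono[rule_format, of t "t+1"] eta_range[rule_format, of "t+1"] that by auto
  have eta_anti: "\<eta> t \<le> \<eta> s" if "0 \<le> s" "s \<le> t" for s t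
    using eta_mono[rule_format, of s t] that by (cases "s = t") auto
  have kap: "\<kappa> A \<in> {0<..1}" if "A \<ge> 0" for A
    unfolding \<kappa>_def using c_range eta_pos[OF that] by auto
  have c_le: "c a \<le> c b" if "a \<in> {0<..1}" "b \<in> {0<..1}" "a \<le> b" for a b
  proof (cases "a = b")
    case False
    then have "a < b" using that by simp
    then show ?thesis using c_mono that unfolding strict_mono_on_def by (auto intro: less_imp_le)
  qed simp
  have kap_anti: "\<kappa> A' \<le> \<kappa> A" if "0 \<le> A" "A \<le> A'" for A A'
    unfolding \<kappa>_def using that eta_pos[of A] eta_pos[of A'] eta_anti[OF that]
    by (intro c_le) auto
  have Gpos: "\<Gamma> k > 0" for k unfolding \<Gamma>_def using kap[OF L0[of k]] by auto
  show ?thesis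
  proof (rule exI[of _ "L K0"], intro allI impI ballI)
    fix n N Phi f
    assume H: "n \<ge> 1 \<and> is_norm_on n N \<and> Phi \<subseteq> Vec n \<and>
     one_vec n \<in> Phi \<and> (\<forall>\<phi>\<in>Phi. (\<lambda>x. - \<phi> x) \<in> Phi) \<and>
     (\<forall>\<phi>\<in>Phi. norminf_n n \<phi> \<le> 1) \<and> lin_span Phi = Vec n \<and>
     (\<forall>f\<in>Vec n. N f \<le> 1 \<longrightarrow> (\<forall>\<phi>\<in>Phi. inner_n n f \<phi> \<le> 1)) \<and>
     (\<forall>f\<in>Vec n. \<forall>e\<in>{0<..1}. norminf_n n f \<le> 1 \<and> N f \<ge> e \<longrightarrow>
         (\<exists>\<phi>\<in>Phi. inner_n n f \<phi> \<ge> c e))"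
      and fV: "f \<in> Vec n" and f01: "\<forall>x\<in>{1..n}. f x \<in> {0..1}"
    from H have n1: "n \<ge> 1" and PV: "Phi \<subseteq> Vec n" and one: "one_vec n \<in> Phi"
      and ninf: "\<forall>\<phi>\<in>Phi. norminf_n n \<phi> \<le> 1"
      and iii: "\<forall>f\<in>Vec n. \<forall>e\<in>{0<..1}. norminf_n n f \<le> 1 \<and> N f \<ge> e \<longrightarrow>
         (\<exists>\<phi>\<in>Phi. inner_n n f \<phi> \<ge> c e)" by blast+
    have nn: "real n > 0" using n1 by simp
    define S where "S = (\<lambda>M. {en n f (valc l) | l. okl Phi l \<and> cplx l \<le> M \<and> (\<forall>x\<in>{1..n}. valc l x \<in> {0..1})})"
    define E where "E = (\<lambda>M. Inf (S M))"
    have en_nn: "en n f g \<ge> 0" for g unfolding en_def using nn by (intro mult_nonneg_nonneg sum_nonneg) auto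
    have bdd: "bdd_below (S M)" for M unfolding S_def bdd_below_def using en_nn by blast
    have zS: "en n f (valc []) \<in> S M" if "M \<ge> 0" for M unfolding S_def using that by force
    have ne: "S M \<noteq> {}" if "M \<ge> 0" for M using zS[OF that] by blast
    have E_lower: "E M \<le> en n f (valc l)" if "okl Phi l" "cplx l \<le> M" "\<forall>x\<in>{1..n}. valc l x \<in> {0..1}" for M l
      unfolding E_def by (rule cInf_lower[OF _ bdd]) (use that in \<open>auto simp: S_def\<close>)
    have E_near: "\<exists>l. okl Phi l \<and> cplx l \<le> M \<and> (\<forall>x\<in>{1..n}. valc l x \<in> {0..1}) \<and> en n f (valc l) < E M + s"
      if Ms: "M \<ge> 0" "s > 0" for M s
    proof -
      have "Inf (S M) < E M + s" using Ms unfolding E_def by simp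
      then obtain y where "y \<in> S M" "y < E M + s" using cInf_less_iff[OF ne[OF Ms(1)] bdd] by blast
      then show ?thesis unfolding S_def by blast
    qed
    have E_mono: "E M' \<le> E M" if "0 \<le> M" "M \<le> M'" for M M'
      unfolding E_def by (rule cInf_superset_mono[OF ne[OF that(1)] bdd]) (use that in \<open>auto simp: S_def\<close>)
    have E_nn: "E M \<ge> 0" if "M \<ge> 0" for M
      unfolding E_def by (rule cInf_greatest[OF ne[OF that]]) (auto simp: S_def en_nn)
    have en0: "en n f (valc []) \<le> 1"
    proof -
      have "(\<Sum>x\<in>{1..n}. (f x - valc [] x)^2) \<le> (\<Sum>x\<in>{1..n}. 1)"
      proof (rule sum_mono)
        fix x assume "x \<in> {1..n}"
        then have "f x \<in> {0..1}" using f01 by blast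
        then show "(f x - valc [] x)^2 \<le> 1" by (simp add: power_le_one)
      qed
      then show ?thesis unfolding en_def using nn by (simp add: field_simps)
    qed
    have E_le1: "E M \<le> 1" if "M \<ge> 0" for M
      using E_lower[of "[]" M] that en0 by simp
    define e where "e = (\<lambda>k. E (L k))"
    have edec: "\<forall>k. e (Suc k) \<le> e k" unfolding e_def
    proof
      fix k show "E (L (Suc k)) \<le> E (L k)" using LSuc(1)[of k] L0[of k] by (intro E_mono) auto
    qed
    have eb: "\<forall>k. 0 \<le> e k \<and> e k \<le> 1" unfolding e_def using E_nn E_le1 L0 by auto
    have ep': "\<epsilon>^2/4 > 0" using eps by simp
    obtain i k where ik: "i \<le> k" "k \<le> K0" "e i - e k \<le> \<epsilon>^2/4" "e k - e (Suc k) < \<Gamma> i"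
      using comb[OF edec eb _ ep', of \<Gamma>] Gpos unfolding K0_def by blast
    define s where "s = (\<lambda>j. min (\<epsilon>^2/8) (\<Gamma> j))"
    have spos: "s j > 0" for j unfolding s_def using Gpos eps by simp
    obtain lA where lA: "okl Phi lA" "cplx lA \<le> L i" "\<forall>x\<in>{1..n}. valc lA x \<in> {0..1}"
        "en n f (valc lA) < e i + s i"
      using E_near[OF L0 spos] unfolding e_def by blast
    obtain lB where lB: "okl Phi lB" "cplx lB \<le> L k" "\<forall>x\<in>{1..n}. valc lB x \<in> {0..1}"
        "en n f (valc lB) < e k + s k"
      using E_near[OF L0 spos] unfolding e_def by blast
    have Lik: "L i \<le> L k" using Linc ik(1) by (simp add: incseqD)
    have kik: "\<kappa> (L k) \<le> \<kappa> (L i)" using kap_anti[OF L0 Lik] .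
    have Gik: "\<Gamma> k \<le> \<Gamma> i" unfolding \<Gamma>_def using kik kap[OF L0[of k]]
      by (auto intro!: divide_right_mono power_mono)
    have gAV: "valc lA \<in> Vec n" by (rule valc_Vec[OF PV lA(1)])
    have gBV: "valc lB \<in> Vec n" by (rule valc_Vec[OF PV lB(1)])
    have claim1: "N (\<lambda>x. f x - valc lB x) \<le> \<eta> (L i)"
    proof (rule ccontr)
      assume "\<not> ?thesis"
      then have big: "N (\<lambda>x. f x - valc lB x) > \<eta> (L i)" by simp
      define e0 where "e0 = min (\<eta> (L i)) 1"
      have e0r: "e0 \<in> {0<..1}" unfolding e0_def using eta_pos[OF L0] by auto
      have f'V: "(\<lambda>x. f x - valc lB x) \<in> Vec n" using fV gBV unfolding Vec_def by auto
      have f'inf: "norminf_n n (\<lambda>x. f x - valc lB x) \<le> 1"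
        unfolding norminf_n_def
      proof (subst Max_le_iff)
        show "finite ((\<lambda>x. \<bar>f x - valc lB x\<bar>) ` {1..n})" by simp
        show "(\<lambda>x. \<bar>f x - valc lB x\<bar>) ` {1..n} \<noteq> {}" using n1 by simp
        show "\<forall>a\<in>(\<lambda>x. \<bar>f x - valc lB x\<bar>) ` {1..n}. a \<le> 1"
        proof
          fix a assume "a \<in> (\<lambda>x. \<bar>f x - valc lB x\<bar>) ` {1..n}"
          then obtain x where x: "x \<in> {1..n}" "a = \<bar>f x - valc lB x\<bar>" by blast
          have "f x \<in> {0..1}" "valc lB x \<in> {0..1}" using f01 lB(3) x(1) by blast+
          then show "a \<le> 1" using x(2) by (auto simp: abs_le_iff)
        qed
      qed
      have "N (\<lambda>x. f x - valc lB x) \<ge> e0" using big unfolding e0_def by linarith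
      then obtain \<phi> where ph: "\<phi> \<in> Phi" "inner_n n (\<lambda>x. f x - valc lB x) \<phi> \<ge> c e0"
        using iii f'V e0r f'inf by blast
      have kapi: "0 < \<kappa> (L i)" "\<kappa> (L i) \<le> 1" using kap[OF L0[of i]] by auto
      have ce: "c e0 = \<kappa> (L i)" unfolding \<kappa>_def e0_def by simp
      define \<delta> where "\<delta> = \<delta>f (L k)"
      have dpos: "\<delta> > 0" unfolding \<delta>_def \<delta>f_def using kap[OF L0[of k]] by auto
      have dle: "\<delta> \<le> (\<kappa> (L i))^2/10" unfolding \<delta>_def \<delta>f_def
        using kik kap[OF L0[of k]] by (auto intro!: divide_right_mono power_mono)
      obtain l' where l': "okl Phi l'" "cplx l' \<le> (\<Sum>m\<le>snd (pol \<delta>). \<bar>fst (pol \<delta>) m\<bar> * (L k+1)^m)"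
          "\<forall>x\<in>{1..n}. valc l' x \<in> {0..1}" "en n f (valc l') \<le> en n f (valc lB) - (\<kappa> (L i))^2/2"
        using improve[OF n1 one ninf f01 lB(1) lB(2) lB(3) ph(1) kapi _ dpos dle, of "fst (pol \<delta>)" "snd (pol \<delta>)"]
          ph(2) ce pol dpos by auto
      have "cplx l' \<le> L (Suc k)" using l'(2) LSuc(2)[of k] unfolding Hf_def \<delta>_def by linarith
      then have "e (Suc k) \<le> en n f (valc l')" unfolding e_def using E_lower l'(1,3) by blast
      moreover have "s k \<le> \<Gamma> i" unfolding s_def using Gik by linarith
      moreover have "(\<kappa> (L i))^2/2 = 2 * \<Gamma> i" unfolding \<Gamma>_def by simp
      ultimately have "e k - e (Suc k) > \<Gamma> i" using l'(4) lB(4) by linarith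
      then show False using ik(4) by linarith
    qed
    define lm where "lm = scl (1/2) (lA @ lB)"
    have lm_ok: "okl Phi lm" unfolding lm_def using lA(1) lB(1) by simp
    have lm_c: "cplx lm \<le> L k" unfolding lm_def using lA(2) lB(2) Lik by simp
    have lm_v: "valc lm x = (valc lA x + valc lB x)/2" for x unfolding lm_def by simp
    have lm_01: "\<forall>x\<in>{1..n}. valc lm x \<in> {0..1}" using lA(3) lB(3) unfolding lm_v by fastforce
    have em: "e k \<le> en n f (valc lm)" unfolding e_def using E_lower[OF lm_ok lm_c lm_01] .
    have pid: "(valc lB x - valc lA x)^2 = 2*(f x - valc lA x)^2 + 2*(f x - valc lB x)^2 - 4*(f x - valc lm x)^2" for x
      unfolding lm_v by (simp add: power2_eq_square algebra_simps)
    have D: "(1/real n) * (\<Sum>x\<in>{1..n}. (valc lB x - valc lA x)^2) = 2 * en n f (valc lA) + 2 * en n f (valc lB) - 4 * en n f (valc lm)"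
      unfolding pid en_def sum_subtractf sum.distrib sum_distrib_left[symmetric] by (simp add: algebra_simps)
    have "s i \<le> \<epsilon>^2/8" "s k \<le> \<epsilon>^2/8" unfolding s_def by auto
    then have "(1/real n) * (\<Sum>x\<in>{1..n}. (valc lB x - valc lA x)^2) \<le> \<epsilon>^2"
      unfolding D using em lA(4) lB(4) ik(3) by linarith
    then have n2: "norm2_n n (\<lambda>x. valc lB x - valc lA x) \<le> \<epsilon>"
      unfolding norm2_n_def using eps real_sqrt_le_mono[of _ "\<epsilon>^2"] by fastforce
    have Mle: "cplx lA \<le> L K0"
    proof -
      have "L i \<le> L K0" using Linc ik(1,2) by (simp add: incseqD)
      then show ?thesis using lA(2) by linarith
    qed
    have etaM: "\<eta> (L i) \<le> \<eta> (cplx lA)" using eta_anti[OF cplx_nonneg lA(2)] .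
    show "\<exists>f1 f2 f3 (k::nat) (lam::nat \<Rightarrow> real) (psi::nat \<Rightarrow> nat \<Rightarrow> real) M.
           f1 \<in> Vec n \<and> f2 \<in> Vec n \<and> f3 \<in> Vec n \<and>
           f = (\<lambda>x. f1 x + f2 x + f3 x) \<and>
           (\<forall>x\<in>{1..n}. f1 x \<in> {0..1} \<and> f1 x + f3 x \<in> {0..1}) \<and>
           (\<forall>i<k. is_prod_of Phi (psi i)) \<and>
           f1 = (\<lambda>x. \<Sum>i<k. lam i * psi i x) \<and>
           M = (\<Sum>i<k. \<bar>lam i\<bar>) \<and> M \<le> L K0 \<and>
           N f2 \<le> \<eta> M \<and> norm2_n n f3 \<le> \<epsilon>"
    proof (intro exI conjI)
      show "valc lA \<in> Vec n" by (rule gAV)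
      show "(\<lambda>x. f x - valc lB x) \<in> Vec n" using fV gBV unfolding Vec_def by auto
      show "(\<lambda>x. valc lB x - valc lA x) \<in> Vec n" using gAV gBV unfolding Vec_def by auto
      show "f = (\<lambda>x. valc lA x + (f x - valc lB x) + (valc lB x - valc lA x))" by auto
      show "\<forall>x\<in>{1..n}. valc lA x \<in> {0..1} \<and> valc lA x + (valc lB x - valc lA x) \<in> {0..1}"
        using lA(3) lB(3) by auto
      show "\<forall>j<length lA. is_prod_of Phi (snd (lA ! j))" using lA(1) unfolding okl_def by auto
      show "valc lA = (\<lambda>x. \<Sum>j<length lA. fst (lA ! j) * snd (lA ! j) x)" by (rule valc_nth)
      show "cplx lA = (\<Sum>j<length lA. \<bar>fst (lA ! j)\<bar>)" by (rule cplx_nth)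
      show "cplx lA \<le> L K0" by (rule Mle)
      show "N (\<lambda>x. f x - valc lB x) \<le> \<eta> (cplx lA)" using claim1 etaM by linarith
      show "norm2_n n (\<lambda>x. valc lB x - valc lA x) \<le> \<epsilon>" by (rule n2)
    qed
  qed
qed


end
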